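(* Let $(X,d)$ be a complete metric space, let $N\in\mathbb{N}\setminus\{0\}$, let $\alpha:X\times X\rightarrow[0,+\infty)$ be $N$--transitive, and let $T:X\rightarrow X$ be an $\alpha$--contractive mapping of Meir--Keeler type satisfying: (A1) $T$ is $\alpha$--admissible; (A2) there exists $x_{0}\in X$ such that $\alpha(x_{0},Tx_{0})\geq1$; (A4) $(X,d)$ is $(T,\alpha)$--regular. Then $T$ has a fixed point.
   Context: $\mathbb{N}$ is the set of non-negative integers; $T^n$ is the $n$-th iterate of $T$. $T$ is an $\alpha$--contractive mapping of Meir--Keeler type if for every $\varepsilon>0$ there exists $\delta(\varepsilon)>0$ such that for all $x,y\in X$: $\varepsilon\leq d(x,y)<\varepsilon+\delta(\varepsilon)$ implies $\alpha(x,y)d(Tx,Ty)<\varepsilon$. $T$ is $\alpha$--admissible if $\alpha(x,y)\geq1$ implies $\alpha(Tx,Ty)\geq1$. $\alpha$ is $N$--transitive if for all $x_0,\dots,x_{N+1}\in X$ with $\alpha(x_i,x_{i+1})\geq1$ for all $i\in\{0,\dots,N\}$ one has $\alpha(x_0,x_{N+1})\geq1$. A sequence $\{x_n\}$ is $(T,\alpha)$--orbital if $x_n=T^nx_0$ and $\alpha(x_n,x_{n+1})\geq1$ for all $n\in\mathbb{N}$. $(X,d)$ is $(T,\alpha)$--regular if for every $(T,\alpha)$--orbital sequence $\{x_n\}$ with $x_n\rightarrow x\in X$ there exists a subsequence $\{x_{n(k)}\}$ with $\alpha(x_{n(k)},x)\geq1$ for all $k$. *)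

theory Defs
  imports "HOL-Analysis.Analysis"
begin

definition alpha_MK_contractive :: "('a::metric_space \<Rightarrow> 'a \<Rightarrow> real) \<Rightarrow> ('a \<Rightarrow> 'a) \<Rightarrow> bool" where
  "alpha_MK_contractive \<alpha> T \<longleftrightarrow>
     (\<forall>\<epsilon>>0. \<exists>\<delta>>0. \<forall>x y. \<epsilon> \<le> dist x y \<and> dist x y < \<epsilon> + \<delta> \<longrightarrow> \<alpha> x y * dist (T x) (T y) < \<epsilon>)"

definition alpha_admissible :: "('a \<Rightarrow> 'a \<Rightarrow> real) \<Rightarrow> ('a \<Rightarrow> 'a) \<Rightarrow> bool" where
  "alpha_admissible \<alpha> T \<longleftrightarrow> (\<forall>x y. \<alpha> x y \<ge> 1 \<longrightarrow> \<alpha> (T x) (T y) \<ge> 1)"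

definition N_transitive :: "nat \<Rightarrow> ('a \<Rightarrow> 'a \<Rightarrow> real) \<Rightarrow> bool" where
  "N_transitive N \<alpha> \<longleftrightarrow>
     (\<forall>x :: nat \<Rightarrow> 'a. (\<forall>i\<le>N. \<alpha> (x i) (x (Suc i)) \<ge> 1) \<longrightarrow> \<alpha> (x 0) (x (Suc N)) \<ge> 1)"

definition orbital :: "('a \<Rightarrow> 'a) \<Rightarrow> ('a \<Rightarrow> 'a \<Rightarrow> real) \<Rightarrow> (nat \<Rightarrow> 'a) \<Rightarrow> bool" where
  "orbital T \<alpha> xs \<longleftrightarrow> (\<forall>n. xs n = (T ^^ n) (xs 0)) \<and> (\<forall>n. \<alpha> (xs n) (xs (Suc n)) \<ge> 1)"

definition T_alpha_regular :: "('a::metric_space \<Rightarrow> 'a) \<Rightarrow> ('a \<Rightarrow> 'a \<Rightarrow> real) \<Rightarrow> bool" where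
  "T_alpha_regular T \<alpha> \<longleftrightarrow>
     (\<forall>(xs :: nat \<Rightarrow> 'a::metric_space) x. orbital T \<alpha> xs \<and> xs \<longlonglongrightarrow> x \<longrightarrow>
        (\<exists>r::nat\<Rightarrow>nat. strict_mono r \<and> (\<forall>k. \<alpha> (xs (r k)) x \<ge> 1)))"

end

theory Submission
  imports Defs
begin

theorem theorem3:
  fixes T :: "'a::complete_space \<Rightarrow> 'a" and \<alpha> :: "'a \<Rightarrow> 'a \<Rightarrow> real" and N :: nat
  assumes "N \<ge> 1"
    and "\<forall>x y. \<alpha> x y \<ge> 0"
    and "N_transitive N \<alpha>"
    and "alpha_MK_contractive \<alpha> T"
    and "alpha_admissible \<alpha> T"
    and "\<exists>x0. \<alpha> x0 (T x0) \<ge> 1"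
    and "T_alpha_regular T \<alpha>"
  shows "\<exists>x. T x = x"
proof -
  have N1: "N \<ge> 1" using assms(1) .
  have MK: "\<And>\<epsilon>. \<epsilon> > 0 \<Longrightarrow> \<exists>\<delta>>0. \<forall>x y. \<epsilon> \<le> dist x y \<and> dist x y < \<epsilon> + \<delta> \<longrightarrow> \<alpha> x y * dist (T x) (T y) < \<epsilon>"
    using assms(4) unfolding alpha_MK_contractive_def by blast
  have L2: "dist (T x) (T y) < \<epsilon>" if "\<alpha> x y \<ge> 1" "\<alpha> x y * dist (T x) (T y) < \<epsilon>" for x y \<epsilon>
  proof -
    have "dist (T x) (T y) \<le> \<alpha> x y * dist (T x) (T y)"
      using that(1) mult_right_mono[of 1 "\<alpha> x y" "dist (T x) (T y)"] by simp
    thus ?thesis using that(2) by linarith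
  qed
  have L1: "dist (T x) (T y) \<le> dist x y" if "\<alpha> x y \<ge> 1" for x y
  proof (cases "dist x y = 0")
    case True thus ?thesis by simp
  next
    case False
    hence "dist x y > 0" by simp
    from MK[OF this] obtain \<delta> where "\<delta> > 0" and
      "\<forall>a b. dist x y \<le> dist a b \<and> dist a b < dist x y + \<delta> \<longrightarrow> \<alpha> a b * dist (T a) (T b) < dist x y" by blast
    hence "\<alpha> x y * dist (T x) (T y) < dist x y" by auto
    with L2[OF that this] show ?thesis by simp
  qed
  obtain x0 where x0: "\<alpha> x0 (T x0) \<ge> 1" using assms(6) by blast
  define x where "x n = (T ^^ n) x0" for n
  have xS: "x (Suc n) = T (x n)" for n by (simp add: x_def)
  have A: "\<alpha> (x n) (x (Suc n)) \<ge> 1" for n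
  proof (induction n)
    case 0 thus ?case using x0 by (simp add: x_def)
  next
    case (Suc n) thus ?case using assms(5) unfolding alpha_admissible_def by (simp add: xS)
  qed
  have B: "\<alpha> (x n) (x (n + 1 + k * N)) \<ge> 1" for n k
  proof (induction k arbitrary: n)
    case 0 thus ?case using A by simp
  next
    case (Suc k)
    define y where "y i = (if i \<le> N then x (n + i) else x (n + 1 + Suc k * N))" for i
    have "\<forall>i\<le>N. \<alpha> (y i) (y (Suc i)) \<ge> 1"
    proof (intro allI impI)
      fix i assume i: "i \<le> N"
      show "\<alpha> (y i) (y (Suc i)) \<ge> 1"
      proof (cases "i < N")
        case True thus ?thesis using A[of "n+i"] by (simp add: y_def)
      next
        case False
        hence "i = N" using i by simp
        thus ?thesis using Suc[of "n+N"] by (simp add: y_def algebra_simps)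
      qed
    qed
    hence "\<alpha> (y 0) (y (Suc N)) \<ge> 1" using assms(3) unfolding N_transitive_def by blast
    thus ?case by (simp add: y_def)
  qed
  have Cmon: "dist (x (n + j)) (x (n + 1 + k * N + j)) \<le> dist (x n) (x (n + 1 + k * N))" for n j k
  proof (induction j)
    case 0 thus ?case by simp
  next
    case (Suc j)
    have "dist (x (n + Suc j)) (x (n + 1 + k * N + Suc j)) = dist (T (x (n + j))) (T (x (n + 1 + k * N + j)))"
      by (simp add: xS[symmetric])
    also have "\<dots> \<le> dist (x (n + j)) (x (n + 1 + k * N + j))"
      using L1 B[of "n+j" k] by (simp add: algebra_simps)
    finally show ?case using Suc by simp
  qed
  define d where "d n = dist (x n) (x (Suc n))" for n
  have ddec: "decseq d"
  proof (rule decseq_SucI)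
    fix n show "d (Suc n) \<le> d n"
      using Cmon[of n 1 0] by (simp add: d_def)
  qed
  obtain r where r: "d \<longlonglongrightarrow> r" "\<forall>i. r \<le> d i"
    using decseq_convergent[OF ddec, of 0] by (auto simp: d_def)
  have r0: "r = 0"
  proof (rule ccontr)
    assume "r \<noteq> 0"
    moreover have "r \<ge> 0" using LIMSEQ_le_const[OF r(1), of 0] by (auto simp: d_def)
    ultimately have rp: "r > 0" by simp
    from MK[OF rp] obtain \<delta> where dp: "\<delta> > 0" and
      H: "\<forall>a b. r \<le> dist a b \<and> dist a b < r + \<delta> \<longrightarrow> \<alpha> a b * dist (T a) (T b) < r" by blast
    have "eventually (\<lambda>n. d n < r + \<delta>) sequentially"
      using r(1) dp by (intro order_tendstoD) auto
    then obtain n where "d n < r + \<delta>" by (auto simp: eventually_sequentially)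
    hence "\<alpha> (x n) (x (Suc n)) * dist (T (x n)) (T (x (Suc n))) < r"
      using H r(2) by (auto simp: d_def)
    hence "d (Suc n) < r" using L2[OF A] by (simp add: d_def xS)
    thus False using r(2) by (simp add: not_less[symmetric])
  qed
  have dlim: "d \<longlonglongrightarrow> 0" using r r0 by simp
  have dsum: "dist (x K) (x (K + j)) \<le> j * \<eta>" if "\<forall>n\<ge>K. d n < \<eta>" for K j \<eta>
  proof (induction j)
    case 0 thus ?case by simp
  next
    case (Suc j)
    have "dist (x K) (x (K + Suc j)) \<le> dist (x K) (x (K + j)) + d (K + j)"
      unfolding d_def using dist_triangle by simp
    also have "\<dots> \<le> j * \<eta> + \<eta>" using Suc that by (intro add_mono) (auto intro: less_imp_le)
    finally show ?case by (simp add: algebra_simps)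
  qed
  have cauchy: "Cauchy x"
  proof (rule metric_CauchyI)
    fix e :: real assume ep: "e > 0"
    define \<epsilon> where "\<epsilon> = e / 3"
    have \<epsilon>p: "\<epsilon> > 0" using ep by (simp add: \<epsilon>_def)
    from MK[OF \<epsilon>p] obtain \<delta>0 where d0p: "\<delta>0 > 0" and
      H0: "\<forall>a b. \<epsilon> \<le> dist a b \<and> dist a b < \<epsilon> + \<delta>0 \<longrightarrow> \<alpha> a b * dist (T a) (T b) < \<epsilon>" by blast
    define \<delta> where "\<delta> = min \<delta>0 \<epsilon>"
    have dp: "\<delta> > 0" "\<delta> \<le> \<delta>0" "\<delta> \<le> \<epsilon>" using d0p \<epsilon>p by (auto simp: \<delta>_def)
    define \<eta> where "\<eta> = \<delta> / (2 * N)"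
    have \<eta>p: "\<eta> > 0" using dp N1 by (simp add: \<eta>_def)
    have N\<eta>: "N * \<eta> = \<delta> / 2" using N1 by (simp add: \<eta>_def)
    have "eventually (\<lambda>n. d n < \<eta>) sequentially"
      using dlim \<eta>p by (intro order_tendstoD) auto
    then obtain K0 where K0: "\<forall>n\<ge>K0. d n < \<eta>" by (auto simp: eventually_sequentially)
    have C: "dist (x K) (x (K + 1 + k * N)) < \<epsilon> + \<delta> / 2" if K: "K \<ge> K0" for K k
    proof (induction k)
      case 0
      have "\<eta> \<le> N * \<eta>" using N1 \<eta>p by simp
      moreover have "d K < \<eta>" using K0 K by simp
      ultimately show ?case using N\<eta> \<epsilon>p by (simp add: d_def)
    next
      case (Suc k)
      have KK: "\<forall>n\<ge>K. d n < \<eta>" using K0 K by auto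
      have first: "dist (x K) (x (K + N)) \<le> \<delta> / 2" using dsum[OF KK, of N] N\<eta> by simp
      have step1: "dist (x (K + 1)) (x (K + 1 + k * N + 1)) < \<epsilon>"
      proof (cases "\<epsilon> \<le> dist (x K) (x (K + 1 + k * N))")
        case True
        hence "\<alpha> (x K) (x (K + 1 + k * N)) * dist (T (x K)) (T (x (K + 1 + k * N))) < \<epsilon>"
          using H0 Suc dp by auto
        from L2[OF B this] show ?thesis by (simp add: xS[symmetric])
      next
        case False
        have "dist (T (x K)) (T (x (K + 1 + k * N))) \<le> dist (x K) (x (K + 1 + k * N))"
          using L1[OF B] .
        thus ?thesis using False by (simp add: xS[symmetric])
      qed
      have "dist (x (K + 1 + (N - 1))) (x (K + 1 + 1 + k * N + (N - 1))) \<le> dist (x (K + 1)) (x (K + 1 + 1 + k * N))"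
        using Cmon .
      moreover have "K + 1 + (N - 1) = K + N" "K + 1 + 1 + k * N + (N - 1) = K + 1 + Suc k * N"
        using N1 by auto
      ultimately have second: "dist (x (K + N)) (x (K + 1 + Suc k * N)) < \<epsilon>"
        using step1 by (simp add: algebra_simps)
      have "dist (x K) (x (K + 1 + Suc k * N)) \<le> dist (x K) (x (K + N)) + dist (x (K + N)) (x (K + 1 + Suc k * N))"
        by (rule dist_triangle)
      thus ?case using first second by linarith
    qed
    have main: "dist (x n) (x (n + j)) < e" if "n \<ge> K0" for n j
    proof (cases "j = 0")
      case True thus ?thesis using ep by simp
    next
      case False
      define k where "k = (j - 1) div N"
      define q where "q = (j - 1) mod N"
      have jq: "n + j = (n + 1 + k * N) + q" using False unfolding k_def q_def
        by (metis Suc_pred' add.assoc add.commute mod_div_mult_eq neq0_conv plus_1_eq_Suc)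
      have qN: "q < N" using N1 by (simp add: q_def)
      have KK: "\<forall>m\<ge>n + 1 + k * N. d m < \<eta>" using K0 that by auto
      have "dist (x (n + 1 + k * N)) (x ((n + 1 + k * N) + q)) \<le> q * \<eta>" by (rule dsum[OF KK])
      hence "dist (x (n + 1 + k * N)) (x (n + j)) \<le> q * \<eta>" by (simp only: jq)
      also have "q * \<eta> \<le> N * \<eta>" using qN \<eta>p by simp
      finally have t2: "dist (x (n + 1 + k * N)) (x (n + j)) \<le> \<delta> / 2" using N\<eta> by simp
      have "dist (x n) (x (n + j)) \<le> dist (x n) (x (n + 1 + k * N)) + dist (x (n + 1 + k * N)) (x (n + j))"
        by (rule dist_triangle)
      also have "\<dots> < \<epsilon> + \<delta>" using C[OF that, of k] t2 by linarith
      also have "\<dots> \<le> e" using dp by (simp add: \<epsilon>_def)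
      finally show ?thesis .
    qed
    show "\<exists>M. \<forall>m\<ge>M. \<forall>n\<ge>M. dist (x m) (x n) < e"
    proof (intro exI allI impI)
      fix m n assume m: "m \<ge> K0" and n: "n \<ge> K0"
      show "dist (x m) (x n) < e"
      proof (cases "m \<le> n")
        case True
        then obtain j where "n = m + j" using le_Suc_ex by blast
        thus ?thesis using main[OF m] by simp
      next
        case False
        then obtain j where "m = n + j" using le_Suc_ex[of n m] by auto
        thus ?thesis using main[OF n] by (simp add: dist_commute)
      qed
    qed
  qed
  then obtain z where z: "x \<longlonglongrightarrow> z" using Cauchy_convergent convergent_def by blast
  have orb: "orbital T \<alpha> x" unfolding orbital_def using A by (simp add: x_def)
  obtain s :: "nat \<Rightarrow> nat" where s: "strict_mono s" "\<forall>k. \<alpha> (x (s k)) z \<ge> 1"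
  proof -
    have "\<forall>(xs :: nat \<Rightarrow> 'a) y. orbital T \<alpha> xs \<and> xs \<longlonglongrightarrow> y \<longrightarrow>
        (\<exists>r::nat\<Rightarrow>nat. strict_mono r \<and> (\<forall>k. \<alpha> (xs (r k)) y \<ge> 1))"
      using assms(7) unfolding T_alpha_regular_def by simp
    note R = this
    have "\<exists>r::nat\<Rightarrow>nat. strict_mono r \<and> (\<forall>k. \<alpha> (x (r k)) z \<ge> 1)"
      using spec[OF spec[OF R, of x], of z] orb z by blast
    thus ?thesis using that by blast
  qed
  have sm: "strict_mono (\<lambda>k. Suc (s k))" using s(1) by (simp add: strict_mono_def)
  have l1: "(\<lambda>k. x (Suc (s k))) \<longlonglongrightarrow> z"
    using LIMSEQ_subseq_LIMSEQ[OF z sm] by (simp add: o_def)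
  have lim0: "(\<lambda>k. dist (x (s k)) z) \<longlonglongrightarrow> 0"
  proof -
    have "(\<lambda>k. x (s k)) \<longlonglongrightarrow> z" using LIMSEQ_subseq_LIMSEQ[OF z s(1)] unfolding o_def .
    thus ?thesis by (rule tendsto_dist_iff[THEN iffD1])
  qed
  have le: "\<forall>k. dist (x (Suc (s k))) (T z) \<le> dist (x (s k)) z"
  proof
    fix k show "dist (x (Suc (s k))) (T z) \<le> dist (x (s k)) z"
      unfolding xS by (rule L1) (use s(2) in blast)
  qed
  have "(\<lambda>k. dist (x (Suc (s k))) (T z)) \<longlonglongrightarrow> 0"
  proof (rule real_tendsto_sandwich[where f="\<lambda>_. 0" and h="\<lambda>k. dist (x (s k)) z"])
    show "\<forall>\<^sub>F n in sequentially. 0 \<le> dist (x (Suc (s n))) (T z)" by (rule always_eventually) simp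
    show "\<forall>\<^sub>F n in sequentially. dist (x (Suc (s n))) (T z) \<le> dist (x (s n)) z"
      by (rule always_eventually) (use le in blast)
    show "(\<lambda>_. 0::real) \<longlonglongrightarrow> 0" by (rule tendsto_const)
    show "(\<lambda>k. dist (x (s k)) z) \<longlonglongrightarrow> 0" by (rule lim0)
  qed
  hence l2: "(\<lambda>k. x (Suc (s k))) \<longlonglongrightarrow> T z" by (rule tendsto_dist_iff[THEN iffD2])
  have "T z = z" using LIMSEQ_unique[OF l2 l1] .
  thus ?thesis by blast
qed

end
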